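(* Let $n\ge 1$ and for $k\ge0$ let ${\sf A}_k(\mathbf u)$ be the $n\times n$ matrix with $({\sf A}_k)_{i,j}=p_{k-j+i}(\mathbf u)$ for $i\le j$ and $0$ for $i>j$, $\mathbf u\in\mathbb C^n$. For a matrix-valued function ${\sf A}(\mathbf u)$ and $\mathbf v\in\mathbb C^n$ write $D{\sf A}[\mathbf v]:=\sum_{l=1}^n v_l\,\frac{\partial {\sf A}}{\partial u_l}$. Then for all $k,m\ge 0$, all $\mathbf u\in\mathbb C^n$ and all $\mathbf w\in\mathbb C^n$: \[ {\sf A}_k{\sf A}_m={\sf A}_m{\sf A}_k, \qquad D{\sf A}_k[{\sf A}_m\mathbf w]-D{\sf A}_m[{\sf A}_k\mathbf w]+{\sf A}_k\,D{\sf A}_m[\mathbf w]-{\sf A}_m\,D{\sf A}_k[\mathbf w]=0 . \] Consequently the flows $\partial_{t_k}\mathbf u={\sf A}_k(\mathbf u)\partial_{t_0}\mathbf u$ are pairwise compatible: for smooth $\mathbf u$ satisfying $\partial_{t_k}\mathbf u={\sf A}_k\partial_{t_0}\mathbf u$ and $\partial_{t_m}\mathbf u={\sf A}_m\partial_{t_0}\mathbf u$, the expressions for $\partial_{t_m}\partial_{t_k}\mathbf u$ and $\partial_{t_k}\partial_{t_m}\mathbf u$ obtained from these equations coincide.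
   Context: The elementary Schur polynomials $p_k(\mathbf u)$, $\mathbf u=(u_1,\dots,u_n)$, are defined by $\exp\big(\sum_{i=1}^n u_i z^i\big)=\sum_{k\ge 0}p_k(\mathbf u)z^k$, with the convention $p_k=0$ for $k<0$. *)

theory Defs
  imports "HOL-Analysis.Analysis" "HOL-Computational_Algebra.Formal_Power_Series"
begin

text \<open>Vectors in C^n are functions nat => complex, components indexed 1..n.
  Matrices are functions nat => nat => complex, entries indexed by 1..n.\<close>

definition useries :: "nat \<Rightarrow> (nat \<Rightarrow> complex) \<Rightarrow> complex fps" where
  "useries n u = Abs_fps (\<lambda>i. if 1 \<le> i \<and> i \<le> n then u i else 0)"

definition schurp :: "nat \<Rightarrow> int \<Rightarrow> (nat \<Rightarrow> complex) \<Rightarrow> complex" where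
  "schurp n k u = (if k < 0 then 0 else fps_nth (fps_exp 1 oo useries n u) (nat k))"

definition Amat :: "nat \<Rightarrow> nat \<Rightarrow> (nat \<Rightarrow> complex) \<Rightarrow> nat \<Rightarrow> nat \<Rightarrow> complex" where
  "Amat n k u i j = (if i \<le> j then schurp n (int k - int j + int i) u else 0)"

definition mmult :: "nat \<Rightarrow> (nat \<Rightarrow> nat \<Rightarrow> complex) \<Rightarrow> (nat \<Rightarrow> nat \<Rightarrow> complex) \<Rightarrow> nat \<Rightarrow> nat \<Rightarrow> complex" where
  "mmult n A B i j = (\<Sum>l=1..n. A i l * B l j)"

definition mvmult :: "nat \<Rightarrow> (nat \<Rightarrow> nat \<Rightarrow> complex) \<Rightarrow> (nat \<Rightarrow> complex) \<Rightarrow> nat \<Rightarrow> complex" where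
  "mvmult n A w i = (\<Sum>j=1..n. A i j * w j)"

definition Dmat :: "nat \<Rightarrow> ((nat \<Rightarrow> complex) \<Rightarrow> nat \<Rightarrow> nat \<Rightarrow> complex) \<Rightarrow> (nat \<Rightarrow> complex)
    \<Rightarrow> (nat \<Rightarrow> complex) \<Rightarrow> nat \<Rightarrow> nat \<Rightarrow> complex" where
  "Dmat n A u v i j = (\<Sum>l=1..n. v l * deriv (\<lambda>x. A (u(l := x)) i j) (u l))"

end

theory Submission
  imports Defs
begin

definition pp :: "nat \<Rightarrow> (nat \<Rightarrow> complex) \<Rightarrow> nat \<Rightarrow> complex" where
  "pp n u j = fps_nth (fps_exp 1 oo useries n u) j"

definition cU :: "nat \<Rightarrow> (nat \<Rightarrow> complex) \<Rightarrow> nat \<Rightarrow> complex" where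
  "cU n u t = (if 1 \<le> t \<and> t \<le> n then u t else 0)"

lemma useries_nth: "fps_nth (useries n u) t = cU n u t"
  by (simp add: useries_def cU_def)

lemma pp_0: "pp n u 0 = 1"
  by (simp add: pp_def)

lemma pp_rec: "of_nat j * pp n u j = (\<Sum>i<j. of_nat (j-i) * cU n u (j-i) * pp n u i)"
proof (cases j)
  case 0 then show ?thesis by simp
next
  case (Suc j')
  have U0: "fps_nth (useries n u) 0 = 0" by (simp add: useries_nth cU_def)
  have "fps_deriv (fps_exp 1 oo useries n u) = (fps_exp 1 oo useries n u) * fps_deriv (useries n u)"
    using fps_compose_deriv[OF U0, of "fps_exp 1"] by simp
  then have "fps_nth (fps_deriv (fps_exp 1 oo useries n u)) j' = fps_nth ((fps_exp 1 oo useries n u) * fps_deriv (useries n u)) j'"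
    by simp
  then have "of_nat (Suc j') * pp n u (Suc j') = (\<Sum>i=0..j'. pp n u i * (of_nat (j' - i + 1) * cU n u (j' - i + 1)))"
    by (simp add: fps_mult_nth pp_def useries_nth add.commute)
  also have "\<dots> = (\<Sum>i<Suc j'. of_nat (Suc j'-i) * cU n u (Suc j'-i) * pp n u i)"
    unfolding atLeast0AtMost lessThan_Suc_atMost
    by (rule sum.cong) (auto simp: Suc_diff_le)
  finally show ?thesis using Suc by simp
qed

lemma cU_upd: "1 \<le> l \<Longrightarrow> l \<le> n \<Longrightarrow> cU n (u(l:=y)) t = (if t = l then y else cU n u t)"
  by (auto simp: cU_def)

lemma pp_deriv:
  assumes l: "1 \<le> l" "l \<le> n"
  shows "((\<lambda>y. pp n (u(l:=y)) j) has_field_derivative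
            (if l \<le> j then pp n (u(l:=x)) (j-l) else 0)) (at x)"
proof (induction j arbitrary: x rule: less_induct)
  case (less j)
  show ?case
  proof (cases j)
    case 0
    then show ?thesis using l by (simp add: pp_0)
  next
    case (Suc j')
    define v where "v = u(l:=x)"
    have eq: "pp n (u(l:=y)) j = (\<Sum>i<j. of_nat (j-i) * cU n (u(l:=y)) (j-i) * pp n (u(l:=y)) i) / of_nat j" for y
    proof -
      have "of_nat j \<noteq> (0::complex)" using Suc by (metis of_nat_neq_0)
      then show ?thesis using pp_rec[of j n "u(l:=y)"] by (metis nonzero_eq_divide_eq mult.commute)
    qed
    have d: "((\<lambda>y. (\<Sum>i<j. of_nat (j-i) * cU n (u(l:=y)) (j-i) * pp n (u(l:=y)) i) / of_nat j)
        has_field_derivative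
        (\<Sum>i<j. of_nat (j-i) * ((if j - i = l then 1 else 0) * pp n v i
             + cU n v (j-i) * (if l \<le> i then pp n v (i-l) else 0))) / of_nat j) (at x)"
    proof -
      have dc: "((\<lambda>y. cU n (u(l:=y)) t) has_field_derivative (if t = l then 1 else 0)) (at x)" for t
        using l by (cases "t = l") (auto simp: cU_upd intro!: derivative_eq_intros)
      have dp: "i < j \<Longrightarrow> ((\<lambda>y. pp n (u(l:=y)) i) has_field_derivative
                 (if l \<le> i then pp n v (i-l) else 0)) (at x)" for i
        using less.IH unfolding v_def by blast
      have ds: "((\<lambda>y. \<Sum>i<j. of_nat (j-i) * cU n (u(l:=y)) (j-i) * pp n (u(l:=y)) i) has_field_derivative
        (\<Sum>i<j. of_nat (j-i) * ((if j - i = l then 1 else 0) * pp n v i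
             + cU n v (j-i) * (if l \<le> i then pp n v (i-l) else 0)))) (at x)"
      proof (rule DERIV_sum)
        fix i assume "i \<in> {..<j}"
        then have "i < j" by simp
        from DERIV_cmult[OF DERIV_mult[OF dc[of "j-i"] dp[OF this]], of "of_nat (j-i)"]
        show "((\<lambda>y. of_nat (j-i) * cU n (u(l:=y)) (j-i) * pp n (u(l:=y)) i) has_field_derivative
          of_nat (j-i) * ((if j - i = l then 1 else 0) * pp n v i
             + cU n v (j-i) * (if l \<le> i then pp n v (i-l) else 0))) (at x)"
          by (simp add: v_def algebra_simps)
      qed
      show ?thesis by (rule DERIV_cdivide[OF ds])
    qed
    have A: "(\<Sum>i<j. of_nat (j-i) * ((if j - i = l then 1 else 0) * pp n v i))
           = (if l \<le> j then of_nat l * pp n v (j-l) else 0)"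
    proof (cases "l \<le> j")
      case True
      have "(\<Sum>i<j. of_nat (j-i) * ((if j - i = l then 1 else 0) * pp n v i))
          = (\<Sum>i<j. if i = j - l then of_nat l * pp n v (j-l) else 0)"
        by (rule sum.cong) (use True in auto)
      also have "\<dots> = of_nat l * pp n v (j-l)" using True l by simp
      finally show ?thesis using True by simp
    next
      case False
      then show ?thesis by (auto intro: sum.neutral)
    qed
    have B: "(\<Sum>i<j. of_nat (j-i) * (cU n v (j-i) * (if l \<le> i then pp n v (i-l) else 0)))
           = (if l \<le> j then of_nat (j-l) * pp n v (j-l) else 0)"
    proof (cases "l \<le> j")
      case True
      have "(\<Sum>i<j. of_nat (j-i) * (cU n v (j-i) * (if l \<le> i then pp n v (i-l) else 0)))
          = (\<Sum>i\<in>{l..<j}. of_nat (j-i) * (cU n v (j-i) * pp n v (i-l)))"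
        by (rule sum.mono_neutral_cong_right) auto
      also have "\<dots> = (\<Sum>i\<in>{0+l..<(j-l)+l}. of_nat (j-i) * (cU n v (j-i) * pp n v (i-l)))"
        using True by simp
      also have "\<dots> = (\<Sum>i\<in>{0..<j-l}. of_nat (j-l-i) * cU n v (j-l-i) * pp n v i)"
        unfolding sum.shift_bounds_nat_ivl by (rule sum.cong) (auto simp: algebra_simps)
      also have "\<dots> = of_nat (j-l) * pp n v (j-l)"
        using pp_rec[of "j-l" n v] by (simp add: atLeast0LessThan)
      finally show ?thesis using True by simp
    next
      case False
      then show ?thesis by (auto intro: sum.neutral)
    qed
    have "(\<Sum>i<j. of_nat (j-i) * ((if j - i = l then 1 else 0) * pp n v i
             + cU n v (j-i) * (if l \<le> i then pp n v (i-l) else 0))) / of_nat j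
         = (if l \<le> j then pp n v (j-l) else 0)"
    proof -
      have nz: "(1 + of_nat j' :: complex) \<noteq> 0" by (metis of_nat_Suc of_nat_neq_0)
      show ?thesis
        unfolding distrib_left sum.distrib A B using Suc nz
        by (auto simp: field_simps of_nat_diff)
    qed
    then show ?thesis using d unfolding eq v_def by simp
  qed
qed

lemma schurp_deriv:
  assumes l: "1 \<le> l" "l \<le> n"
  shows "((\<lambda>x. schurp n t (u(l:=x))) has_field_derivative schurp n (t - int l) (u(l:=y))) (at y)"
proof (cases "t < 0")
  case True
  then show ?thesis by (simp add: schurp_def)
next
  case False
  have e: "schurp n t v = pp n v (nat t)" for v using False by (simp add: schurp_def pp_def)
  show ?thesis
  proof (cases "l \<le> nat t")
    case True
    have "schurp n (t - int l) (u(l:=y)) = pp n (u(l:=y)) (nat t - l)"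
      using True False by (simp add: schurp_def pp_def nat_diff_distrib)
    then show ?thesis unfolding e using pp_deriv[OF l, of u "nat t" y] True by simp
  next
    case f2: False
    have "schurp n (t - int l) (u(l:=y)) = 0" using f2 by (simp add: schurp_def)
    then show ?thesis unfolding e using pp_deriv[OF l, of u "nat t" y] f2 by simp
  qed
qed

definition TA :: "(int \<Rightarrow> complex) \<Rightarrow> nat \<Rightarrow> nat \<Rightarrow> nat \<Rightarrow> complex" where
  "TA P k i j = (if i \<le> j then P (int k - int j + int i) else 0)"

definition TD :: "(int \<Rightarrow> complex) \<Rightarrow> nat \<Rightarrow> nat \<Rightarrow> (nat \<Rightarrow> complex) \<Rightarrow> nat \<Rightarrow> nat \<Rightarrow> complex" where
  "TD P n k v i j = (if i \<le> j then (\<Sum>l=1..n. v l * P (int k - int j + int i - int l)) else 0)"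

lemma Amat_TA: "Amat n k u = TA (\<lambda>t. schurp n t u) k"
  by (auto simp: fun_eq_iff Amat_def TA_def)

lemma Dmat_TD: "Dmat n (Amat n k) u v = TD (\<lambda>t. schurp n t u) n k v"
proof (intro ext)
  fix i j
  show "Dmat n (Amat n k) u v i j = TD (\<lambda>t. schurp n t u) n k v i j"
  proof (cases "i \<le> j")
    case True
    have dd: "deriv (\<lambda>x. Amat n k (u(l := x)) i j) (u l) = schurp n (int k - int j + int i - int l) u"
      if "l \<in> {1..n}" for l
    proof -
      from that have l: "1 \<le> l" "l \<le> n" by auto
      have "((\<lambda>x. Amat n k (u(l := x)) i j) has_field_derivative
              schurp n (int k - int j + int i - int l) (u(l:=u l))) (at (u l))"
        using schurp_deriv[OF l, of "int k - int j + int i" u "u l"] True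
        by (simp add: Amat_def)
      then show ?thesis by (simp add: DERIV_imp_deriv)
    qed
    have "(\<Sum>l=1..n. v l * deriv (\<lambda>x. Amat n k (u(l := x)) i j) (u l))
        = (\<Sum>l=1..n. v l * schurp n (int k - int j + int i - int l) u)"
      by (rule sum.cong) (simp_all add: dd)
    then show ?thesis unfolding Dmat_def TD_def using True by simp
  next
    case False
    then show ?thesis by (simp add: Dmat_def TD_def Amat_def)
  qed
qed

lemma nat_int_sum:
  fixes f :: "int \<Rightarrow> complex"
  assumes "1 \<le> i" "j \<le> n"
  shows "(\<Sum>l=1..n. if i \<le> l \<and> l \<le> j then f (int l) else 0) = (\<Sum>x\<in>{int i..int j}. f x)"
proof -
  have "(\<Sum>l=1..n. if i \<le> l \<and> l \<le> j then f (int l) else 0) = (\<Sum>l\<in>{i..j}. f (int l))"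
    by (rule sum.mono_neutral_cong_right) (use assms in auto)
  also have "\<dots> = (\<Sum>x\<in>{int i..int j}. f x)"
    by (rule sum.reindex_bij_witness[of _ nat int]) auto
  finally show ?thesis .
qed

lemma isum_shift:
  fixes g :: "int \<Rightarrow> complex"
  shows "(\<Sum>x\<in>{a..b}. g (x + c)) = (\<Sum>y\<in>{a+c..b+c}. g y)"
  by (rule sum.reindex_bij_witness[of _ "\<lambda>y. y - c" "\<lambda>x. x + c"]) auto

lemma isum_refl:
  fixes g :: "int \<Rightarrow> complex"
  shows "(\<Sum>x\<in>{a..b}. g (c - x)) = (\<Sum>y\<in>{c-b..c-a}. g y)"
  by (rule sum.reindex_bij_witness[of _ "\<lambda>y. c - y" "\<lambda>x. c - x"]) auto

lemma isum_split:
  fixes g :: "int \<Rightarrow> complex"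
  assumes "a \<le> b + 1" "b \<le> c"
  shows "(\<Sum>x\<in>{a..c}. g x) = (\<Sum>x\<in>{a..b}. g x) + (\<Sum>x\<in>{b+1..c}. g x)"
proof -
  have "{a..c} = {a..b} \<union> {b+1..c}" using assms by auto
  then show ?thesis by (simp add: sum.union_disjoint)
qed

lemma keyG:
  fixes P :: "int \<Rightarrow> complex" and i j s m k :: int
  assumes "i \<le> j" "0 \<le> s"
  shows "(\<Sum>x\<in>{1..s}. P (m-s+x) * P (k-j+i-x)) + (\<Sum>x\<in>{i..j}. P (k-x+i) * P (m-j+x-s))
       = (\<Sum>y\<in>{m-s-(j-i)..m}. P y * P (m+k-s-(j-i)-y))"
proof -
  define g where "g y = P y * P (m+k-s-(j-i)-y)" for y
  have 1: "(\<Sum>x\<in>{1..s}. P (m-s+x) * P (k-j+i-x)) = (\<Sum>x\<in>{1..s}. g (x + (m-s)))"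
    by (rule sum.cong) (auto simp: g_def algebra_simps)
  have 2: "(\<Sum>x\<in>{i..j}. P (k-x+i) * P (m-j+x-s)) = (\<Sum>x\<in>{i..j}. g (x + (m-j-s)))"
    by (rule sum.cong) (auto simp: g_def algebra_simps)
  have "(\<Sum>y\<in>{m-s-(j-i)..m}. g y) = (\<Sum>y\<in>{m-s-(j-i)..m-s}. g y) + (\<Sum>y\<in>{m-s+1..m}. g y)"
    by (rule isum_split) (use assms in auto)
  also have "(\<Sum>y\<in>{m-s-(j-i)..m-s}. g y) = (\<Sum>x\<in>{i..j}. g (x + (m-j-s)))"
    by (subst isum_shift) (simp add: algebra_simps)
  also have "(\<Sum>y\<in>{m-s+1..m}. g y) = (\<Sum>x\<in>{1..s}. g (x + (m-s)))"
    by (subst isum_shift) (simp add: algebra_simps)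
  finally show ?thesis unfolding 1 2 g_def by simp
qed

lemma keyG_sym:
  fixes P :: "int \<Rightarrow> complex" and d s m k :: int
  shows "(\<Sum>y\<in>{m-s-d..m}. P y * P (m+k-s-d-y)) = (\<Sum>y\<in>{k-s-d..k}. P y * P (m+k-s-d-y))"
proof -
  have "(\<Sum>y\<in>{m-s-d..m}. P y * P (m+k-s-d-y)) = (\<Sum>y\<in>{m-s-d..m}. (\<lambda>t. P (m+k-s-d-t) * P t) (m+k-s-d-y))"
    by (simp add: mult.commute)
  also have "\<dots> = (\<Sum>y\<in>{k-s-d..k}. P (m+k-s-d-y) * P y)"
    by (subst isum_refl) (simp add: algebra_simps)
  finally show ?thesis by (simp add: mult.commute)
qed

lemma part1:
  fixes P :: "int \<Rightarrow> complex"
  assumes "i \<in> {1..n}" "j \<in> {1..n}"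
  shows "mmult n (TA P k) (TA P m) i j = mmult n (TA P m) (TA P k) i j"
proof -
  have e: "mmult n (TA P a) (TA P b) i j = (\<Sum>x\<in>{int i..int j}. P (int a - x + int i) * P (int b - int j + x))" for a b
  proof -
    have "mmult n (TA P a) (TA P b) i j = (\<Sum>l=1..n. if i \<le> l \<and> l \<le> j then
        (\<lambda>x. P (int a - x + int i) * P (int b - int j + x)) (int l) else 0)"
      unfolding mmult_def TA_def by (rule sum.cong) auto
    also have "\<dots> = (\<Sum>x\<in>{int i..int j}. P (int a - x + int i) * P (int b - int j + x))"
      by (rule nat_int_sum) (use assms in auto)
    finally show ?thesis .
  qed
  have "(\<Sum>x\<in>{int i..int j}. P (int k - x + int i) * P (int m - int j + x))
      = (\<Sum>x\<in>{int i..int j}. (\<lambda>y. P (int k - y + int i) * P (int m - int j + y)) (int i + int j - x))"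
    by (subst isum_refl) (simp add: algebra_simps)
  also have "\<dots> = (\<Sum>x\<in>{int i..int j}. P (int m - x + int i) * P (int k - int j + x))"
    by (rule sum.cong) (auto simp: algebra_simps)
  finally show ?thesis unfolding e .
qed

lemma T1:
  fixes P :: "int \<Rightarrow> complex"
  assumes "i \<le> j"
  shows "TD P n a (mvmult n (TA P b) w) i j
    = (\<Sum>s=1..n. w s * (\<Sum>x\<in>{1..int s}. P (int b - int s + x) * P (int a - int j + int i - x)))"
proof -
  have "TD P n a (mvmult n (TA P b) w) i j
      = (\<Sum>l=1..n. \<Sum>s=1..n. TA P b l s * w s * P (int a - int j + int i - int l))"
    unfolding TD_def mvmult_def using assms by (simp add: sum_distrib_right)
  also have "\<dots> = (\<Sum>s=1..n. \<Sum>l=1..n. TA P b l s * w s * P (int a - int j + int i - int l))"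
    by (rule sum.swap)
  also have "\<dots> = (\<Sum>s=1..n. w s * (\<Sum>x\<in>{1..int s}. P (int b - int s + x) * P (int a - int j + int i - x)))"
  proof (rule sum.cong[OF refl])
    fix s assume s: "s \<in> {1..n}"
    have "(\<Sum>l=1..n. TA P b l s * w s * P (int a - int j + int i - int l))
        = w s * (\<Sum>l=1..n. if 1 \<le> l \<and> l \<le> s then
             (\<lambda>x. P (int b - int s + x) * P (int a - int j + int i - x)) (int l) else 0)"
      unfolding sum_distrib_left by (rule sum.cong) (auto simp: TA_def algebra_simps)
    also have "\<dots> = w s * (\<Sum>x\<in>{1..int s}. P (int b - int s + x) * P (int a - int j + int i - x))"
      using nat_int_sum[of 1 s n "\<lambda>x. P (int b - int s + x) * P (int a - int j + int i - x)"] s by simp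
    finally show "(\<Sum>l=1..n. TA P b l s * w s * P (int a - int j + int i - int l)) = \<dots>" .
  qed
  finally show ?thesis .
qed

lemma T3:
  fixes P :: "int \<Rightarrow> complex"
  assumes "i \<in> {1..n}" "j \<in> {1..n}"
  shows "mmult n (TA P a) (TD P n b w) i j
    = (\<Sum>s=1..n. w s * (\<Sum>x\<in>{int i..int j}. P (int a - x + int i) * P (int b - int j + x - int s)))"
proof -
  have "mmult n (TA P a) (TD P n b w) i j
      = (\<Sum>l=1..n. \<Sum>s=1..n. (if i \<le> l \<and> l \<le> j then w s * (P (int a - int l + int i) * P (int b - int j + int l - int s)) else 0))"
    unfolding mmult_def by (rule sum.cong) (auto simp: TA_def TD_def sum_distrib_left algebra_simps)
  also have "\<dots> = (\<Sum>s=1..n. \<Sum>l=1..n. (if i \<le> l \<and> l \<le> j then w s * (P (int a - int l + int i) * P (int b - int j + int l - int s)) else 0))"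
    by (rule sum.swap)
  also have "\<dots> = (\<Sum>s=1..n. w s * (\<Sum>x\<in>{int i..int j}. P (int a - x + int i) * P (int b - int j + x - int s)))"
  proof (rule sum.cong[OF refl])
    fix s assume s: "s \<in> {1..n}"
    have "(\<Sum>l=1..n. (if i \<le> l \<and> l \<le> j then w s * (P (int a - int l + int i) * P (int b - int j + int l - int s)) else 0))
        = w s * (\<Sum>l=1..n. if i \<le> l \<and> l \<le> j then
             (\<lambda>x. P (int a - x + int i) * P (int b - int j + x - int s)) (int l) else 0)"
      unfolding sum_distrib_left by (rule sum.cong) auto
    also have "\<dots> = w s * (\<Sum>x\<in>{int i..int j}. P (int a - x + int i) * P (int b - int j + x - int s))"
      using nat_int_sum[of i j n "\<lambda>x. P (int a - x + int i) * P (int b - int j + x - int s)"] assms by simp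
    finally show "(\<Sum>l=1..n. (if i \<le> l \<and> l \<le> j then w s * (P (int a - int l + int i) * P (int b - int j + int l - int s)) else 0)) = \<dots>" .
  qed
  finally show ?thesis .
qed

lemma part2:
  fixes P :: "int \<Rightarrow> complex"
  assumes ij: "i \<in> {1..n}" "j \<in> {1..n}"
  shows "TD P n k (mvmult n (TA P m) w) i j - TD P n m (mvmult n (TA P k) w) i j
     + mmult n (TA P k) (TD P n m w) i j - mmult n (TA P m) (TD P n k w) i j = 0"
proof (cases "i \<le> j")
  case False
  have "mmult n (TA P a) (TD P n b v) i j = 0" for a b v
    unfolding mmult_def by (rule sum.neutral) (use False in \<open>auto simp: TA_def TD_def\<close>)
  then show ?thesis using False by (simp add: TD_def)
next
  case True
  define X where "X a b s = (\<Sum>x\<in>{1..int s}. P (int b - int s + x) * P (int a - int j + int i - x))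
      + (\<Sum>x\<in>{int i..int j}. P (int a - x + int i) * P (int b - int j + x - int s))" for a b s
  have S: "TD P n a (mvmult n (TA P b) w) i j + mmult n (TA P a) (TD P n b w) i j
      = (\<Sum>s=1..n. w s * X a b s)" for a b
    unfolding T1[OF True] T3[OF ij] X_def by (simp add: sum.distrib distrib_left)
  have XX: "X k m s = X m k s" for s
  proof -
    have "X k m s = (\<Sum>y\<in>{int m - int s - (int j - int i)..int m}. P y * P (int m + int k - int s - (int j - int i) - y))"
      unfolding X_def using keyG[of "int i" "int j" "int s" P "int m" "int k"] True
      by (simp add: algebra_simps)
    also have "\<dots> = (\<Sum>y\<in>{int k - int s - (int j - int i)..int k}. P y * P (int m + int k - int s - (int j - int i) - y))"
      by (rule keyG_sym)
    also have "\<dots> = X m k s"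
      unfolding X_def using keyG[of "int i" "int j" "int s" P "int k" "int m"] True
      by (simp add: algebra_simps)
    finally show ?thesis .
  qed
  have "TD P n k (mvmult n (TA P m) w) i j + mmult n (TA P k) (TD P n m w) i j
      = TD P n m (mvmult n (TA P k) w) i j + mmult n (TA P m) (TD P n k w) i j"
    unfolding S XX ..
  then show ?thesis by (simp add: algebra_simps)
qed

lemma part3_aux:
  "mvmult n X w i + mvmult n A (\<lambda>r. mvmult n B w r + mvmult n C z r) i
   = mvmult n (\<lambda>i j. X i j + mmult n A B i j) w i + mvmult n (mmult n A C) z i"
  unfolding mvmult_def mmult_def
  by (simp add: sum.distrib distrib_left distrib_right sum_distrib_left sum_distrib_right
      algebra_simps) (rule arg_cong2[where f="(+)"]; rule sum.swap)

lemma mvmult_cong: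
  "(\<And>j. j \<in> {1..n} \<Longrightarrow> A i j = B i j) \<Longrightarrow> mvmult n A w i = mvmult n B w i"
  unfolding mvmult_def by (rule sum.cong) auto

theorem mainTheorem4:
  fixes n k m :: nat and u w z :: "nat \<Rightarrow> complex"
  assumes "n \<ge> 1"
  shows "(\<forall>i\<in>{1..n}. \<forall>j\<in>{1..n}.
            mmult n (Amat n k u) (Amat n m u) i j = mmult n (Amat n m u) (Amat n k u) i j)
       \<and> (\<forall>i\<in>{1..n}. \<forall>j\<in>{1..n}.
            Dmat n (Amat n k) u (mvmult n (Amat n m u) w) i j
          - Dmat n (Amat n m) u (mvmult n (Amat n k u) w) i j
          + mmult n (Amat n k u) (Dmat n (Amat n m) u w) i j
          - mmult n (Amat n m u) (Dmat n (Amat n k) u w) i j = 0)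
       \<and> (\<forall>i\<in>{1..n}.
            mvmult n (Dmat n (Amat n k) u (mvmult n (Amat n m u) w)) w i
          + mvmult n (Amat n k u)
              (\<lambda>r. mvmult n (Dmat n (Amat n m) u w) w r + mvmult n (Amat n m u) z r) i
          = mvmult n (Dmat n (Amat n m) u (mvmult n (Amat n k u) w)) w i
          + mvmult n (Amat n m u)
              (\<lambda>r. mvmult n (Dmat n (Amat n k) u w) w r + mvmult n (Amat n k u) z r) i)"
proof -
  define P where "P = (\<lambda>t. schurp n t u)"
  have A: "Amat n a u = TA P a" for a unfolding P_def by (rule Amat_TA)
  have D: "Dmat n (Amat n a) u v = TD P n a v" for a v unfolding P_def by (rule Dmat_TD)
  have p1: "\<forall>i\<in>{1..n}. \<forall>j\<in>{1..n}. mmult n (TA P k) (TA P m) i j = mmult n (TA P m) (TA P k) i j"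
    using part1 by blast
  have p2: "\<forall>i\<in>{1..n}. \<forall>j\<in>{1..n}.
            TD P n k (mvmult n (TA P m) w) i j - TD P n m (mvmult n (TA P k) w) i j
          + mmult n (TA P k) (TD P n m w) i j - mmult n (TA P m) (TD P n k w) i j = 0"
    using part2 by blast
  have p3: "\<forall>i\<in>{1..n}.
            mvmult n (TD P n k (mvmult n (TA P m) w)) w i
          + mvmult n (TA P k) (\<lambda>r. mvmult n (TD P n m w) w r + mvmult n (TA P m) z r) i
          = mvmult n (TD P n m (mvmult n (TA P k) w)) w i
          + mvmult n (TA P m) (\<lambda>r. mvmult n (TD P n k w) w r + mvmult n (TA P k) z r) i"
  proof
    fix i assume i: "i \<in> {1..n}"
    have e1: "mvmult n (\<lambda>i j. TD P n k (mvmult n (TA P m) w) i j + mmult n (TA P k) (TD P n m w) i j) w i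
        = mvmult n (\<lambda>i j. TD P n m (mvmult n (TA P k) w) i j + mmult n (TA P m) (TD P n k w) i j) w i"
      by (rule mvmult_cong) (use p2 i in \<open>auto simp: algebra_simps eq_diff_eq\<close>)
    have e2: "mvmult n (mmult n (TA P k) (TA P m)) z i = mvmult n (mmult n (TA P m) (TA P k)) z i"
      by (rule mvmult_cong) (use p1 i in auto)
    show "mvmult n (TD P n k (mvmult n (TA P m) w)) w i
          + mvmult n (TA P k) (\<lambda>r. mvmult n (TD P n m w) w r + mvmult n (TA P m) z r) i
          = mvmult n (TD P n m (mvmult n (TA P k) w)) w i
          + mvmult n (TA P m) (\<lambda>r. mvmult n (TD P n k w) w r + mvmult n (TA P k) z r) i"
      unfolding part3_aux e1 e2 ..
  qed
  show ?thesis unfolding A D using p1 p2 p3 by blast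
qed

end
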